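(* Let $G$ and $G_0$ be cacti-graphs with $G_0$ a subgraph of $G$. Then either $G=G_0$ or there exist sequences $(P_1,\dots,P_r)$ and $(G_0,G_1,\dots,G_r)$ of subgraphs of $G$ such that $G_r=G$, every $G_i$ is a cacti-graph, and for every $i\in\{1,\dots,r\}$: $G_i=G_{i-1}\cup P_i$ with $E(P_i)\cap E(G_{i-1})=\emptyset$, where $P_i$ is a path, a cycle, a lollipop, or a bicycle, and (p) if $P_i$ is a path then $V(G_{i-1})\cap V(P_i)=End(P_i)$; (l) if $P_i$ is a lollipop then $V(G_{i-1})\cap V(P_i)=End(P_i)$; (c) if $P_i$ is a cycle then $|V(G_{i-1})\cap V(P_i)|=1$; (b) if $P_i$ is a bicycle then $V(G_{i-1})\cap V(P_i)=\emptyset$. Consequently $G_{i-1}$ is a proper subgraph of $G_i$ and $\Delta G_i-\Delta G_{i-1}=1$ for all $i$.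
   Context: Graphs are finite, may have loops and parallel edges, and have no isolated vertices unless stated otherwise. A leaf is a vertex incident to exactly one edge, which is not a loop. $\Delta G=|E(G)|-|V(G)|$. A cycle is a connected graph all of whose vertices have degree 2 (a loop contributes 2; a single vertex with a loop is a cycle). An $(x,y)$-path is a path with distinct end vertices $x,y$ and at least one edge, and $End(P)=\{x,y\}$. A lollipop is a graph obtained from a cycle $C$ (possibly a loop) and a vertex-disjoint path $P$ with end vertices $y,x$ by identifying a vertex of $C$ with $y$; $End(Q)=\{x\}$. A bicycle is a connected graph with no leaves and $\Delta=1$. A cacti-graph is a graph with no isolated vertices, no leaves, and no component that is a cycle (equivalently, no isolated vertices, no leaves, and every component contains at least two cycles). *)

theory Defs
  imports Main
begin

text \<open>Multigraphs (loops and parallel edges allowed) are represented over a fixed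
incidence map ends :: 'e => 'v set, where each edge e has ends e a set of one
(loop) or two vertices. Since all graphs considered have no isolated vertices,
a (sub)graph is determined by its edge set F; its vertex set is verts ends F.\<close>

definition verts :: "('e \<Rightarrow> 'v set) \<Rightarrow> 'e set \<Rightarrow> 'v set" where
  "verts ends F = \<Union> (ends ` F)"

text \<open>Degree: a loop contributes 2.\<close>
definition deg :: "('e \<Rightarrow> 'v set) \<Rightarrow> 'e set \<Rightarrow> 'v \<Rightarrow> nat" where
  "deg ends F v = card {e \<in> F. v \<in> ends e} + card {e \<in> F. ends e = {v}}"

definition excess :: "('e \<Rightarrow> 'v set) \<Rightarrow> 'e set \<Rightarrow> int" where
  "excess ends F = int (card F) - int (card (verts ends F))"

definition adj :: "('e \<Rightarrow> 'v set) \<Rightarrow> 'e set \<Rightarrow> 'v \<Rightarrow> 'v \<Rightarrow> bool" where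
  "adj ends F u w \<longleftrightarrow> (\<exists>e \<in> F. u \<in> ends e \<and> w \<in> ends e)"

definition connected_graph :: "('e \<Rightarrow> 'v set) \<Rightarrow> 'e set \<Rightarrow> bool" where
  "connected_graph ends F \<longleftrightarrow>
     (\<forall>u \<in> verts ends F. \<forall>w \<in> verts ends F. (adj ends F)\<^sup>*\<^sup>* u w)"

definition comp :: "('e \<Rightarrow> 'v set) \<Rightarrow> 'e set \<Rightarrow> 'v \<Rightarrow> 'e set" where
  "comp ends F v = {e \<in> F. \<exists>u \<in> ends e. (adj ends F)\<^sup>*\<^sup>* v u}"

definition is_leaf :: "('e \<Rightarrow> 'v set) \<Rightarrow> 'e set \<Rightarrow> 'v \<Rightarrow> bool" where
  "is_leaf ends F v \<longleftrightarrow> card {e \<in> F. v \<in> ends e} = 1 \<and> (\<forall>e \<in> F. ends e \<noteq> {v})"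

definition is_cycle :: "('e \<Rightarrow> 'v set) \<Rightarrow> 'e set \<Rightarrow> bool" where
  "is_cycle ends F \<longleftrightarrow> F \<noteq> {} \<and> connected_graph ends F \<and>
     (\<forall>v \<in> verts ends F. deg ends F v = 2)"

definition is_path :: "('e \<Rightarrow> 'v set) \<Rightarrow> 'e set \<Rightarrow> 'v \<Rightarrow> 'v \<Rightarrow> bool" where
  "is_path ends F x y \<longleftrightarrow>
     (\<exists>vs es. es \<noteq> [] \<and> length vs = Suc (length es) \<and> distinct vs \<and> distinct es \<and>
        (\<forall>i < length es. ends (es ! i) = {vs ! i, vs ! Suc i}) \<and>
        set es = F \<and> hd vs = x \<and> last vs = y)"

definition is_any_path :: "('e \<Rightarrow> 'v set) \<Rightarrow> 'e set \<Rightarrow> bool" where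
  "is_any_path ends F \<longleftrightarrow> (\<exists>x y. is_path ends F x y)"

definition is_lollipop :: "('e \<Rightarrow> 'v set) \<Rightarrow> 'e set \<Rightarrow> 'v \<Rightarrow> bool" where
  "is_lollipop ends F x \<longleftrightarrow>
     (\<exists>C P y. is_cycle ends C \<and> is_path ends P x y \<and> C \<inter> P = {} \<and>
        verts ends C \<inter> verts ends P = {y} \<and> F = C \<union> P)"

definition is_any_lollipop :: "('e \<Rightarrow> 'v set) \<Rightarrow> 'e set \<Rightarrow> bool" where
  "is_any_lollipop ends F \<longleftrightarrow> (\<exists>x. is_lollipop ends F x)"

definition is_bicycle :: "('e \<Rightarrow> 'v set) \<Rightarrow> 'e set \<Rightarrow> bool" where
  "is_bicycle ends F \<longleftrightarrow> connected_graph ends F \<and>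
     (\<forall>v \<in> verts ends F. \<not> is_leaf ends F v) \<and> excess ends F = 1"

text \<open>Cacti-graph: no isolated vertices (automatic in this representation),
no leaves, and no component is a cycle.\<close>
definition is_cacti :: "('e \<Rightarrow> 'v set) \<Rightarrow> 'e set \<Rightarrow> bool" where
  "is_cacti ends F \<longleftrightarrow> (\<forall>v \<in> verts ends F. \<not> is_leaf ends F v) \<and>
     (\<forall>v \<in> verts ends F. \<not> is_cycle ends (comp ends F v))"

end

theory Submission
  imports Defs
begin


definition good :: "('e \<Rightarrow> 'v set) \<Rightarrow> 'e set \<Rightarrow> bool" where
  "good ends F \<longleftrightarrow> finite F \<and> (\<forall>e\<in>F. card (ends e) = 1 \<or> card (ends e) = 2)"

lemma good_mono: "good ends F \<Longrightarrow> G \<subseteq> F \<Longrightarrow> good ends G"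
  unfolding good_def by (auto intro: finite_subset)

lemma verts_Un[simp]: "verts ends (A \<union> B) = verts ends A \<union> verts ends B"
  unfolding verts_def by auto
lemma verts_insert[simp]: "verts ends (insert e A) = ends e \<union> verts ends A"
  unfolding verts_def by auto
lemma verts_empty[simp]: "verts ends {} = {}"
  unfolding verts_def by auto
lemma verts_mono: "A \<subseteq> B \<Longrightarrow> verts ends A \<subseteq> verts ends B"
  unfolding verts_def by auto
lemma in_verts: "e \<in> F \<Longrightarrow> v \<in> ends e \<Longrightarrow> v \<in> verts ends F"
  unfolding verts_def by auto
lemma in_vertsE: "v \<in> verts ends F \<Longrightarrow> (\<And>e. e \<in> F \<Longrightarrow> v \<in> ends e \<Longrightarrow> P) \<Longrightarrow> P"
  unfolding verts_def by auto

lemma good_ends: "good ends F \<Longrightarrow> e \<in> F \<Longrightarrow> finite (ends e) \<and> ends e \<noteq> {}"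
  unfolding good_def by (metis card.infinite card_0_eq zero_neq_one zero_neq_numeral)

lemma good_endsE: "good ends F \<Longrightarrow> e \<in> F \<Longrightarrow> v \<in> ends e \<Longrightarrow>
   (ends e = {v} \<Longrightarrow> P) \<Longrightarrow> (\<And>u. ends e = {v,u} \<Longrightarrow> u \<noteq> v \<Longrightarrow> P) \<Longrightarrow> P"
proof -
  assume g: "good ends F" "e \<in> F" "v \<in> ends e" and 1: "ends e = {v} \<Longrightarrow> P"
    and 2: "\<And>u. ends e = {v,u} \<Longrightarrow> u \<noteq> v \<Longrightarrow> P"
  from g have "card (ends e) = 1 \<or> card (ends e) = 2" unfolding good_def by auto
  then show P
  proof
    assume "card (ends e) = 1"
    then obtain a where "ends e = {a}" by (auto simp: card_Suc_eq)
    with g 1 show P by auto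
  next
    assume "card (ends e) = 2"
    then obtain a b where ab: "ends e = {a,b}" "a \<noteq> b" by (auto simp: card_Suc_eq numeral_2_eq_2)
    show P
    proof (cases "v = a")
      case True with ab 2 show P by auto
    next
      case False with ab g have "v = b" by auto
      with ab 2[of a] show P by (auto simp: insert_commute)
    qed
  qed
qed

lemma finite_verts: "good ends F \<Longrightarrow> finite (verts ends F)"
  unfolding verts_def using good_ends by (metis finite_UN good_def)

lemma deg_Un: "A \<inter> B = {} \<Longrightarrow> finite A \<Longrightarrow> finite B \<Longrightarrow>
   deg ends (A \<union> B) v = deg ends A v + deg ends B v"
proof -
  assume a: "A \<inter> B = {}" "finite A" "finite B"
  have 1: "{e \<in> A \<union> B. v \<in> ends e} = {e \<in> A. v \<in> ends e} \<union> {e \<in> B. v \<in> ends e}" by auto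
  have 2: "{e \<in> A \<union> B. ends e = {v}} = {e \<in> A. ends e = {v}} \<union> {e \<in> B. ends e = {v}}" by auto
  show ?thesis unfolding deg_def 1 2
    by (subst card_Un_disjoint, use a in auto)+
qed

lemma deg_mono: "A \<subseteq> B \<Longrightarrow> finite B \<Longrightarrow> deg ends A v \<le> deg ends B v"
  unfolding deg_def
  by (intro add_mono card_mono) (auto intro: finite_subset)

lemma deg_zero: "v \<notin> verts ends F \<Longrightarrow> deg ends F v = 0"
proof -
  assume "v \<notin> verts ends F"
  then have "{e \<in> F. v \<in> ends e} = {}" "{e \<in> F. ends e = {v}} = {}" unfolding verts_def by auto
  then show ?thesis unfolding deg_def by (metis card.empty add_0)
qed

lemma deg_pos: "finite F \<Longrightarrow> v \<in> verts ends F \<Longrightarrow> deg ends F v \<ge> 1"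
proof -
  assume "finite F" "v \<in> verts ends F"
  then obtain e where "e \<in> F" "v \<in> ends e" by (auto elim: in_vertsE)
  then have "{e \<in> F. v \<in> ends e} \<noteq> {}" by auto
  with \<open>finite F\<close> have "card {e \<in> F. v \<in> ends e} \<ge> 1"
    by (simp add: Suc_leI card_gt_0_iff)
  then show ?thesis unfolding deg_def by simp
qed

lemma leaf_iff: "finite F \<Longrightarrow> is_leaf ends F v \<longleftrightarrow> deg ends F v = 1"
proof -
  assume f: "finite F"
  have sub: "{e \<in> F. ends e = {v}} \<subseteq> {e \<in> F. v \<in> ends e}" by auto
  have c: "card {e \<in> F. ends e = {v}} \<le> card {e \<in> F. v \<in> ends e}"
    using f sub by (intro card_mono) auto
  show ?thesis
  proof
    assume "is_leaf ends F v"
    then have "{e \<in> F. ends e = {v}} = {}" "card {e \<in> F. v \<in> ends e} = 1" unfolding is_leaf_def by auto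
    then show "deg ends F v = 1" unfolding deg_def by (metis card.empty add.right_neutral)
  next
    assume d: "deg ends F v = 1"
    then have "card {e \<in> F. ends e = {v}} = 0" using c unfolding deg_def by linarith
    then have "{e \<in> F. ends e = {v}} = {}" using f by simp
    moreover have "card {e \<in> F. v \<in> ends e} = 1" using d c \<open>card {e \<in> F. ends e = {v}} = 0\<close>
      unfolding deg_def by linarith
    ultimately show "is_leaf ends F v" unfolding is_leaf_def by auto
  qed
qed

lemma nonleaf_deg: "finite F \<Longrightarrow> v \<in> verts ends F \<Longrightarrow> \<not> is_leaf ends F v \<Longrightarrow> deg ends F v \<ge> 2"
  using leaf_iff deg_pos by (metis One_nat_def Suc_1 Suc_leI le_neq_implies_less)

lemma deg_edge: "ends e = {a,b} \<Longrightarrow> a \<noteq> b \<Longrightarrow> deg ends {e} v = (if v \<in> {a,b} then 1 else 0)"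
  unfolding deg_def by (auto simp: Collect_conv_if doubleton_eq_iff)

lemma deg_loop: "ends e = {a} \<Longrightarrow> deg ends {e} v = (if v = a then 2 else 0)"
  unfolding deg_def by (auto simp: Collect_conv_if)

lemma deg_insert: "e \<notin> F \<Longrightarrow> finite F \<Longrightarrow> deg ends (insert e F) v = deg ends {e} v + deg ends F v"
  using deg_Un[of "{e}" F ends v] by auto



lemma card_filter_sum: "finite A \<Longrightarrow> card {x \<in> A. P x} = (\<Sum>x\<in>A. if P x then 1 else 0::nat)"
  by (simp add: sum.If_cases Int_def conj_commute)

lemma handshake:
  assumes g: "good ends F"
  shows "(\<Sum>v\<in>verts ends F. deg ends F v) = 2 * card F"
proof -
  let ?V = "verts ends F"
  have fV: "finite ?V" using g finite_verts by blast
  have fF: "finite F" using g good_def by blast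
  have 1: "(\<Sum>v\<in>?V. card {e \<in> F. v \<in> ends e}) = (\<Sum>e\<in>F. card (ends e))"
  proof -
    have "(\<Sum>v\<in>?V. card {e \<in> F. v \<in> ends e}) = (\<Sum>v\<in>?V. \<Sum>e\<in>F. if v \<in> ends e then 1 else 0)"
      using fF by (simp add: card_filter_sum)
    also have "\<dots> = (\<Sum>e\<in>F. \<Sum>v\<in>?V. if v \<in> ends e then 1 else 0)" by (rule sum.swap)
    also have "\<dots> = (\<Sum>e\<in>F. card {v \<in> ?V. v \<in> ends e})" using fV by (simp add: card_filter_sum)
    also have "\<dots> = (\<Sum>e\<in>F. card (ends e))"
    proof (rule sum.cong)
      fix e assume "e \<in> F"
      then have "{v \<in> ?V. v \<in> ends e} = ends e" by (auto intro: in_verts)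
      then show "card {v \<in> ?V. v \<in> ends e} = card (ends e)" by simp
    qed simp
    finally show ?thesis .
  qed
  have 2: "(\<Sum>v\<in>?V. card {e \<in> F. ends e = {v}}) = (\<Sum>e\<in>F. if card (ends e) = 1 then 1 else 0)"
  proof -
    have "(\<Sum>v\<in>?V. card {e \<in> F. ends e = {v}}) = (\<Sum>v\<in>?V. \<Sum>e\<in>F. if ends e = {v} then 1 else 0)"
      using fF by (simp add: card_filter_sum)
    also have "\<dots> = (\<Sum>e\<in>F. \<Sum>v\<in>?V. if ends e = {v} then 1 else 0)" by (rule sum.swap)
    also have "\<dots> = (\<Sum>e\<in>F. card {v \<in> ?V. ends e = {v}})" using fV by (simp add: card_filter_sum)
    also have "\<dots> = (\<Sum>e\<in>F. if card (ends e) = 1 then 1 else 0)"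
    proof (rule sum.cong)
      fix e assume e: "e \<in> F"
      show "card {v \<in> ?V. ends e = {v}} = (if card (ends e) = 1 then 1 else 0)"
      proof (cases "card (ends e) = 1")
        case True
        then obtain a where a: "ends e = {a}" by (auto simp: card_Suc_eq)
        then have "{v \<in> ?V. ends e = {v}} = {a}" using e by (auto intro: in_verts)
        then show ?thesis using True by simp
      next
        case False
        then have "{v \<in> ?V. ends e = {v}} = {}" by auto
        then show ?thesis using False by (metis card.empty)
      qed
    qed simp
    finally show ?thesis .
  qed
  have "(\<Sum>v\<in>?V. deg ends F v) = (\<Sum>v\<in>?V. card {e \<in> F. v \<in> ends e}) + (\<Sum>v\<in>?V. card {e \<in> F. ends e = {v}})"
    unfolding deg_def by (simp add: sum.distrib)
  also have "\<dots> = (\<Sum>e\<in>F. card (ends e) + (if card (ends e) = 1 then 1 else 0))"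
    unfolding 1 2 by (simp add: sum.distrib)
  also have "\<dots> = (\<Sum>e\<in>F. 2)"
    using g unfolding good_def by (intro sum.cong) auto
  finally show ?thesis by simp
qed

lemma deg_const_excess:
  assumes g: "good ends F" and d: "\<forall>v \<in> verts ends F. deg ends F v = 2"
  shows "excess ends F = 0"
proof -
  have "(\<Sum>v\<in>verts ends F. deg ends F v) = (\<Sum>v\<in>verts ends F. 2)" using d by simp
  then have "2 * card F = 2 * card (verts ends F)" using handshake[OF g] by simp
  then show ?thesis unfolding excess_def by simp
qed

lemma cycle_excess: "good ends F \<Longrightarrow> is_cycle ends F \<Longrightarrow> excess ends F = 0"
  unfolding is_cycle_def using deg_const_excess by blast



lemma reach_mono: "(adj ends A)\<^sup>*\<^sup>* u w \<Longrightarrow> A \<subseteq> B \<Longrightarrow> (adj ends B)\<^sup>*\<^sup>* u w"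
proof (induction rule: rtranclp_induct)
  case base then show ?case by simp
next
  case (step y z)
  then have "adj ends B y z" unfolding adj_def by auto
  with step show ?case by (meson rtranclp.rtrancl_into_rtrancl)
qed

lemma connected_Un:
  assumes "connected_graph ends A" "connected_graph ends B" "verts ends A \<inter> verts ends B \<noteq> {}"
  shows "connected_graph ends (A \<union> B)"
  unfolding connected_graph_def
proof (intro ballI)
  fix u w assume u: "u \<in> verts ends (A \<union> B)" and w: "w \<in> verts ends (A \<union> B)"
  obtain c where c: "c \<in> verts ends A" "c \<in> verts ends B" using assms(3) by auto
  have uc: "(adj ends (A \<union> B))\<^sup>*\<^sup>* u c"
  proof -
    from u have "u \<in> verts ends A \<or> u \<in> verts ends B" by simp
    then show ?thesis
    proof
      assume "u \<in> verts ends A"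
      then have "(adj ends A)\<^sup>*\<^sup>* u c" using assms(1) c unfolding connected_graph_def by blast
      then show ?thesis by (rule reach_mono) auto
    next
      assume "u \<in> verts ends B"
      then have "(adj ends B)\<^sup>*\<^sup>* u c" using assms(2) c unfolding connected_graph_def by blast
      then show ?thesis by (rule reach_mono) auto
    qed
  qed
  have cw: "(adj ends (A \<union> B))\<^sup>*\<^sup>* c w"
  proof -
    from w have "w \<in> verts ends A \<or> w \<in> verts ends B" by simp
    then show ?thesis
    proof
      assume "w \<in> verts ends A"
      then have "(adj ends A)\<^sup>*\<^sup>* c w" using assms(1) c unfolding connected_graph_def by blast
      then show ?thesis by (rule reach_mono) auto
    next
      assume "w \<in> verts ends B"
      then have "(adj ends B)\<^sup>*\<^sup>* c w" using assms(2) c unfolding connected_graph_def by blast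
      then show ?thesis by (rule reach_mono) auto
    qed
  qed
  from uc cw show "(adj ends (A \<union> B))\<^sup>*\<^sup>* u w" by (rule rtranclp_trans)
qed

lemma connected_single: "connected_graph ends {e}"
  unfolding connected_graph_def verts_def adj_def by auto

inductive pth :: "('e \<Rightarrow> 'v set) \<Rightarrow> 'e set \<Rightarrow> 'v \<Rightarrow> 'v \<Rightarrow> bool" for ends where
  one: "ends e = {x,y} \<Longrightarrow> x \<noteq> y \<Longrightarrow> pth ends {e} x y"
| cons: "pth ends P z y \<Longrightarrow> ends e = {x,z} \<Longrightarrow> x \<notin> verts ends P \<Longrightarrow> pth ends (insert e P) x y"

lemma pth_basic: "pth ends P x y \<Longrightarrow> finite P \<and> P \<noteq> {} \<and> x \<noteq> y \<and> x \<in> verts ends P \<and> y \<in> verts ends P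
   \<and> (\<forall>e\<in>P. card (ends e) = 2)"
proof (induction rule: pth.induct)
  case (one e x y) then show ?case by (auto simp: verts_def)
next
  case (cons P z y e x)
  then have "x \<noteq> z" by auto
  with cons show ?case by auto
qed

lemma pth_notin: "pth ends P z y \<Longrightarrow> ends e = {x,z} \<Longrightarrow> x \<notin> verts ends P \<Longrightarrow> e \<notin> P"
  by (auto intro: in_verts)

lemma pth_card: "pth ends P x y \<Longrightarrow> card (verts ends P) = Suc (card P)"
proof (induction rule: pth.induct)
  case (one e x y) then show ?case by (auto simp: verts_def)
next
  case (cons P z y e x)
  have b: "finite P" "z \<in> verts ends P" using pth_basic[OF cons(1)] by auto
  have "good ends P" using pth_basic[OF cons(1)] unfolding good_def by auto
  then have "finite (verts ends P)" by (rule finite_verts)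
  have "e \<notin> P" using pth_notin cons by metis
  have "verts ends (insert e P) = insert x (verts ends P)" using cons b by auto
  then show ?case using cons \<open>e \<notin> P\<close> b \<open>finite (verts ends P)\<close> by simp
qed

lemma pth_deg: "pth ends P x y \<Longrightarrow>
   deg ends P v = (if v = x \<or> v = y then 1 else if v \<in> verts ends P then 2 else 0)"
proof (induction arbitrary: v rule: pth.induct)
  case (one e x y) then show ?case by (simp add: deg_edge)
next
  case (cons P z y e x)
  have b: "finite P" "z \<in> verts ends P" "z \<noteq> y" "y \<in> verts ends P" using pth_basic[OF cons(1)] by auto
  have "e \<notin> P" using pth_notin cons by metis
  have xz: "x \<noteq> z" using cons b by auto
  have "deg ends (insert e P) v = deg ends {e} v + deg ends P v" using deg_insert \<open>e \<notin> P\<close> b by metis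
  then show ?case using cons b xz by (auto simp: deg_edge deg_zero)
qed

lemma pth_conn: "pth ends P x y \<Longrightarrow> connected_graph ends P"
proof (induction rule: pth.induct)
  case (one e x y) show ?case by (rule connected_single)
next
  case (cons P z y e x)
  have b: "z \<in> verts ends P" using pth_basic[OF cons(1)] by auto
  have "connected_graph ends ({e} \<union> P)"
    by (rule connected_Un[OF connected_single cons(4)]) (use cons b in auto)
  then show ?case by simp
qed

lemma pth_snoc: "pth ends P x z \<Longrightarrow> ends e = {z,u} \<Longrightarrow> u \<notin> verts ends P \<Longrightarrow> pth ends (insert e P) x u"
proof (induction arbitrary: e u rule: pth.induct)
  case (one e' x y)
  then have "x \<noteq> u" "y \<noteq> u" by auto
  have "pth ends {e} y u" using one by (intro pth.one) (auto simp: insert_commute)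
  then have "pth ends (insert e' {e}) x u" by (rule pth.cons) (use one \<open>x \<noteq> u\<close> in auto)
  then show ?case by (simp add: insert_commute)
next
  case (cons P z y e' x)
  have u: "u \<notin> verts ends P" "u \<noteq> x" using cons.prems cons.hyps by auto
  have p1: "pth ends (insert e P) z u" using cons.IH cons.prems(1) u by blast
  have p2: "x \<notin> verts ends (insert e P)"
    using cons u pth_basic[OF cons(1)] by auto
  have "pth ends (insert e' (insert e P)) x u" by (rule pth.cons[OF p1 cons.hyps(2) p2])
  then show ?case by (simp add: insert_commute)
qed

lemma pth_rev: "pth ends P x y \<Longrightarrow> pth ends P y x"
proof (induction rule: pth.induct)
  case (one e x y) then show ?case by (intro pth.one) (auto simp: insert_commute)
next
  case (cons P z y e x)
  then show ?case by (intro pth_snoc) (auto simp: insert_commute)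
qed

lemma pth_split: "pth ends P a b \<Longrightarrow> u \<in> verts ends P \<Longrightarrow> u \<noteq> a \<Longrightarrow> u \<noteq> b \<Longrightarrow>
  \<exists>P1 P2. pth ends P1 a u \<and> pth ends P2 u b \<and> P1 \<inter> P2 = {} \<and>
     verts ends P1 \<inter> verts ends P2 = {u} \<and> P = P1 \<union> P2"
proof (induction rule: pth.induct)
  case (one e x y) then show ?case by (auto simp: verts_def)
next
  case (cons P z y e x)
  have b: "z \<in> verts ends P" "z \<noteq> y" using pth_basic[OF cons(1)] by auto
  have en: "e \<notin> P" using pth_notin cons by metis
  show ?case
  proof (cases "u = z")
    case True
    have "pth ends {e} x u" using cons True b by (intro pth.one) auto
    moreover have "verts ends {e} \<inter> verts ends P = {u}" using cons True b by auto
    ultimately show ?thesis using cons True en by (intro exI[of _ "{e}"] exI[of _ P]) auto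
  next
    case False
    then have "u \<in> verts ends P" using cons by auto
    then obtain P1 P2 where p: "pth ends P1 z u" "pth ends P2 u y" "P1 \<inter> P2 = {}"
      "verts ends P1 \<inter> verts ends P2 = {u}" "P = P1 \<union> P2"
      using cons False by blast
    have "pth ends (insert e P1) x u" using p cons by (intro pth.cons) auto
    moreover have "e \<notin> P2" using en p by auto
    moreover have "verts ends (insert e P1) \<inter> verts ends P2 = {u}"
      using p cons b pth_basic[OF p(1)] by auto
    ultimately show ?thesis using p by (intro exI[of _ "insert e P1"] exI[of _ P2]) auto
  qed
qed



definition PL :: "('e \<Rightarrow> 'v set) \<Rightarrow> 'v list \<Rightarrow> 'e list \<Rightarrow> bool" where
  "PL ends vs es \<longleftrightarrow> es \<noteq> [] \<and> length vs = Suc (length es) \<and> distinct vs \<and> distinct es \<and>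
        (\<forall>i < length es. ends (es ! i) = {vs ! i, vs ! Suc i})"

lemma is_path_PL: "is_path ends F x y \<longleftrightarrow> (\<exists>vs es. PL ends vs es \<and> set es = F \<and> hd vs = x \<and> last vs = y)"
  unfolding is_path_def PL_def by blast

lemma PL_verts: "PL ends vs es \<Longrightarrow> verts ends (set es) = set vs"
proof
  assume p: "PL ends vs es"
  show "verts ends (set es) \<subseteq> set vs"
  proof
    fix v assume "v \<in> verts ends (set es)"
    then obtain e where "e \<in> set es" "v \<in> ends e" by (auto elim: in_vertsE)
    then obtain i where i: "i < length es" "es ! i = e" by (auto simp: in_set_conv_nth)
    then have "ends e = {vs ! i, vs ! Suc i}" using p unfolding PL_def by auto
    moreover have "Suc i < length vs" using p i unfolding PL_def by auto
    ultimately show "v \<in> set vs" using \<open>v \<in> ends e\<close> by auto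
  qed
  show "set vs \<subseteq> verts ends (set es)"
  proof
    fix v assume "v \<in> set vs"
    then obtain j where j: "j < length vs" "vs ! j = v" by (auto simp: in_set_conv_nth)
    show "v \<in> verts ends (set es)"
    proof (cases "j < length es")
      case True
      then have "v \<in> ends (es ! j)" using p j unfolding PL_def by auto
      then show ?thesis using True by (meson in_verts nth_mem)
    next
      case False
      then have "j = length es" "length es > 0" using p j unfolding PL_def by auto
      then have "ends (es ! (j - 1)) = {vs ! (j - 1), vs ! j}" "j - 1 < length es" using p unfolding PL_def by auto
      then show ?thesis using j by (metis in_verts insertCI nth_mem)
    qed
  qed
qed

lemma pth_PL: "pth ends P x y \<Longrightarrow> \<exists>vs es. PL ends vs es \<and> set es = P \<and> hd vs = x \<and> last vs = y"
proof (induction rule: pth.induct)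
  case (one e x y)
  then show ?case by (intro exI[of _ "[x,y]"] exI[of _ "[e]"]) (auto simp: PL_def)
next
  case (cons P z y e x)
  then obtain vs es where v: "PL ends vs es" "set es = P" "hd vs = z" "last vs = y" by blast
  have "vs \<noteq> []" using v unfolding PL_def by auto
  have xn: "x \<notin> set vs" using PL_verts[OF v(1)] v cons by auto
  have en: "e \<notin> set es" using pth_notin cons v by metis
  have "PL ends (x # vs) (e # es)"
    unfolding PL_def
  proof (intro conjI allI impI)
    fix i assume i: "i < length (e # es)"
    show "ends ((e # es) ! i) = {(x # vs) ! i, (x # vs) ! Suc i}"
    proof (cases i)
      case 0 then show ?thesis using cons v \<open>vs \<noteq> []\<close> by (simp add: hd_conv_nth)
    next
      case (Suc j) then show ?thesis using i v unfolding PL_def by auto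
    qed
  qed (use v xn en in \<open>auto simp: PL_def\<close>)
  then show ?case using v \<open>vs \<noteq> []\<close> by (intro exI[of _ "x # vs"] exI[of _ "e # es"]) auto
qed

lemma PL_pth: "PL ends vs es \<Longrightarrow> pth ends (set es) (hd vs) (last vs)"
proof (induction es arbitrary: vs)
  case Nil then show ?case by (simp add: PL_def)
next
  case (Cons e es)
  obtain a b vs'' where vs: "vs = a # b # vs''"
    using Cons.prems unfolding PL_def by (cases vs; cases "tl vs") auto
  have ee: "ends e = {a, b}" using Cons.prems vs unfolding PL_def by force
  have ab: "a \<noteq> b" using Cons.prems vs unfolding PL_def by auto
  show ?case
  proof (cases "es = []")
    case True
    then have "vs'' = []" using Cons.prems vs unfolding PL_def by auto
    then show ?thesis using True vs ee ab by (auto intro: pth.one)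
  next
    case False
    have pl: "PL ends (b # vs'') es"
      unfolding PL_def
    proof (intro conjI allI impI)
      fix i assume "i < length es"
      then have "Suc i < length (e # es)" by simp
      then have "ends ((e # es) ! Suc i) = {vs ! Suc i, vs ! Suc (Suc i)}"
        using Cons.prems unfolding PL_def by blast
      then show "ends (es ! i) = {(b # vs'') ! i, (b # vs'') ! Suc i}" using vs by simp
    qed (use False Cons.prems vs in \<open>auto simp: PL_def\<close>)
    have p: "pth ends (set es) b (last (b # vs''))" using Cons.IH[OF pl] by simp
    have "a \<notin> verts ends (set es)" using PL_verts[OF pl] Cons.prems vs unfolding PL_def by auto
    then have "pth ends (insert e (set es)) a (last (b # vs''))" by (rule pth.cons[OF p ee])
    then show ?thesis using vs by simp
  qed
qed

lemma pth_iff: "is_path ends F x y \<longleftrightarrow> pth ends F x y"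
  unfolding is_path_PL using pth_PL PL_pth by metis



definition lolli :: "('e \<Rightarrow> 'v set) \<Rightarrow> 'e set \<Rightarrow> 'v \<Rightarrow> bool" where
  "lolli ends F x \<longleftrightarrow> (\<exists>C P y. is_cycle ends C \<and> pth ends P x y \<and> C \<inter> P = {} \<and>
        verts ends C \<inter> verts ends P = {y} \<and> F = C \<union> P)"

lemma lolli_iff: "is_lollipop ends F x \<longleftrightarrow> lolli ends F x"
  unfolding is_lollipop_def lolli_def pth_iff ..

lemma exc_union:
  assumes "good ends (A \<union> B)" "A \<inter> B = {}"
  shows "excess ends (A \<union> B) = excess ends A + excess ends B + int (card (verts ends A \<inter> verts ends B))"
proof -
  have gA: "good ends A" and gB: "good ends B" using assms good_mono by blast+
  then have f: "finite A" "finite B" "finite (verts ends A)" "finite (verts ends B)"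
    using finite_verts good_def by blast+
  have c1: "card (A \<union> B) = card A + card B" using f assms card_Un_disjoint by blast
  have c2: "card (verts ends A \<union> verts ends B) + card (verts ends A \<inter> verts ends B)
        = card (verts ends A) + card (verts ends B)" using f card_Un_Int by metis
  show ?thesis unfolding excess_def using c1 c2 by simp
qed

lemma cycle_loop: "ends e = {a} \<Longrightarrow> is_cycle ends {e}"
  unfolding is_cycle_def using connected_single[of ends e] by (auto simp: deg_loop verts_def)

lemma cycle_close:
  assumes p: "pth ends P a b" and e: "e \<notin> P" "ends e = {a,b}"
  shows "is_cycle ends (insert e P)"
proof -
  have b: "finite P" "a \<noteq> b" "a \<in> verts ends P" "b \<in> verts ends P" using pth_basic[OF p] by auto
  have "connected_graph ends ({e} \<union> P)"
    by (rule connected_Un[OF connected_single pth_conn[OF p]]) (use e b in auto)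
  moreover have "\<forall>v \<in> verts ends (insert e P). deg ends (insert e P) v = 2"
  proof
    fix v assume v: "v \<in> verts ends (insert e P)"
    have "deg ends (insert e P) v = deg ends {e} v + deg ends P v" using deg_insert e b by metis
    then show "deg ends (insert e P) v = 2"
      using v b e by (auto simp: deg_edge pth_deg[OF p])
  qed
  ultimately show ?thesis unfolding is_cycle_def by auto
qed

lemma cycle_deg: "is_cycle ends F \<Longrightarrow> deg ends F v \<noteq> 1"
proof (cases "v \<in> verts ends F")
  case True
  assume "is_cycle ends F"
  then have "deg ends F v = 2" using True unfolding is_cycle_def by auto
  then show ?thesis by simp
next
  case False then show ?thesis using deg_zero[OF False] by simp
qed

lemma cycle_deg2: "is_cycle ends F \<Longrightarrow> v \<in> verts ends F \<Longrightarrow> deg ends F v = 2"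
  by (simp add: is_cycle_def)

lemma cycle_conn: "is_cycle ends F \<Longrightarrow> connected_graph ends F"
  unfolding is_cycle_def by auto

lemma L_pth: "pth ends P x y \<Longrightarrow> {v. deg ends P v = 1} = {x,y}"
proof (intro set_eqI)
  fix v assume p: "pth ends P x y"
  show "v \<in> {v. deg ends P v = 1} \<longleftrightarrow> v \<in> {x,y}"
    using pth_deg[OF p, of v] by (cases "v = x \<or> v = y"; cases "v \<in> verts ends P") simp_all
qed

lemma L_cycle: "is_cycle ends F \<Longrightarrow> {v. deg ends F v = 1} = {}"
  using cycle_deg[of ends F] by (metis (mono_tags) empty_Collect_eq)

lemma L_bicycle: "finite F \<Longrightarrow> is_bicycle ends F \<Longrightarrow> {v. deg ends F v = 1} = {}"
proof safe
  fix v assume f: "finite F" and b: "is_bicycle ends F" and d: "deg ends F v = 1"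
  have "v \<in> verts ends F"
  proof (rule ccontr)
    assume "v \<notin> verts ends F" then have "deg ends F v = 0" by (rule deg_zero)
    with d show False by simp
  qed
  moreover have "is_leaf ends F v" using leaf_iff[OF f, of ends v] d by simp
  moreover have "\<forall>v\<in>verts ends F. \<not> is_leaf ends F v" using b by (simp add: is_bicycle_def)
  ultimately show "v \<in> {}" by simp
qed

lemma L_lolli:
  assumes g: "good ends F" and l: "lolli ends F x"
  shows "{v. deg ends F v = 1} = {x}"
proof -
  obtain C P y where c: "is_cycle ends C" "pth ends P x y" "C \<inter> P = {}"
     "verts ends C \<inter> verts ends P = {y}" "F = C \<union> P"
    using l unfolding lolli_def by blast
  have f: "finite C" "finite P" using g c(5) unfolding good_def by auto
  have b: "x \<noteq> y" "x \<in> verts ends P" using pth_basic[OF c(2)] by auto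
  have d: "deg ends F v = deg ends C v + deg ends P v" for v unfolding c(5) by (rule deg_Un[OF c(3) f])
  have yC: "y \<in> verts ends C" using c(4) by blast
  have dy: "deg ends C y = 2" using cycle_deg2[OF c(1) yC] .
  have xC: "x \<notin> verts ends C" using c(4) b by blast
  have dC: "deg ends C v = 0 \<or> deg ends C v = 2" for v
  proof (cases "v \<in> verts ends C")
    case True then show ?thesis using cycle_deg2[OF c(1)] by blast
  next
    case False then show ?thesis using deg_zero by metis
  qed
  have key: "deg ends F v = 1 \<longleftrightarrow> v = x" for v
  proof (cases "v = y")
    case True
    have "deg ends P y = 1" using pth_deg[OF c(2), of y] by simp
    then have "deg ends F y = 3" using d[of y] dy by simp
    then show ?thesis using True b by simp
  next
    case False
    note pd = pth_deg[OF c(2), of v]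
    show ?thesis
    proof (cases "v = x")
      case True
      then have "deg ends P v = 1" using pd by simp
      moreover have "deg ends C v = 0" using deg_zero[OF xC] True by simp
      ultimately show ?thesis using d[of v] True by simp
    next
      case False
      then have "deg ends P v = 0 \<or> deg ends P v = 2" using pd \<open>v \<noteq> y\<close> by simp
      then have "deg ends F v \<noteq> 1" using d[of v] dC[of v] by auto
      then show ?thesis using False by simp
    qed
  qed
  show ?thesis
  proof (intro set_eqI)
    fix v show "v \<in> {v. deg ends F v = 1} \<longleftrightarrow> v \<in> {x}" using key[of v] by simp
  qed
qed

lemma exc_pth: "pth ends P x y \<Longrightarrow> excess ends P = -1"
proof -
  assume p: "pth ends P x y"
  have "card (verts ends P) = Suc (card P)" by (rule pth_card[OF p])
  then show ?thesis by (simp add: excess_def)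
qed

lemma lolli_parts: "lolli ends F x \<Longrightarrow> good ends F \<Longrightarrow> excess ends F = 0 \<and> connected_graph ends F \<and> F \<noteq> {}"
proof -
  assume l: "lolli ends F x" and g: "good ends F"
  obtain C P y where c: "is_cycle ends C" "pth ends P x y" "C \<inter> P = {}"
     "verts ends C \<inter> verts ends P = {y}" "F = C \<union> P"
    using l unfolding lolli_def by blast
  have gCP: "good ends (C \<union> P)" using g c(5) by simp
  have "excess ends F = excess ends C + excess ends P + int (card (verts ends C \<inter> verts ends P))"
    unfolding c(5) by (rule exc_union[OF gCP c(3)])
  also have "\<dots> = 0"
  proof -
    have "good ends C" by (rule good_mono[OF gCP]) simp
    then have "excess ends C = 0" by (rule cycle_excess[OF _ c(1)])
    moreover have "excess ends P = -1" by (rule exc_pth[OF c(2)])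
    ultimately show ?thesis using c(4) by simp
  qed
  finally have "excess ends F = 0" .
  moreover have "connected_graph ends F" unfolding c(5)
    by (rule connected_Un[OF cycle_conn[OF c(1)] pth_conn[OF c(2)]]) (use c(4) in auto)
  moreover have "F \<noteq> {}" using pth_basic[OF c(2)] c(5) by simp
  ultimately show ?thesis by blast
qed



lemma comp_sub: "comp ends F v \<subseteq> F"
  unfolding comp_def by auto

lemma adj_sym: "adj ends F u w \<Longrightarrow> adj ends F w u"
  unfolding adj_def by auto

lemma reach_sym: "(adj ends F)\<^sup>*\<^sup>* u w \<Longrightarrow> (adj ends F)\<^sup>*\<^sup>* w u"
proof (induction rule: rtranclp_induct)
  case base then show ?case by simp
next
  case (step y z)
  have "adj ends F z y" by (rule adj_sym[OF step(2)])
  then show ?case using step(3) by (rule converse_rtranclp_into_rtranclp)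
qed

lemma comp_verts: "u \<in> verts ends (comp ends F v) \<Longrightarrow> (adj ends F)\<^sup>*\<^sup>* v u"
proof -
  assume "u \<in> verts ends (comp ends F v)"
  then obtain e where e: "e \<in> comp ends F v" "u \<in> ends e" by (auto elim: in_vertsE)
  then obtain w where w: "w \<in> ends e" "(adj ends F)\<^sup>*\<^sup>* v w" "e \<in> F" unfolding comp_def by auto
  have "adj ends F w u" unfolding adj_def using w e by auto
  with w show ?thesis by (meson rtranclp.rtrancl_into_rtrancl)
qed

lemma comp_edge: "e \<in> F \<Longrightarrow> u \<in> ends e \<Longrightarrow> (adj ends F)\<^sup>*\<^sup>* v u \<Longrightarrow> e \<in> comp ends F v"
  unfolding comp_def by auto

lemma deg_comp: "u \<in> verts ends (comp ends F v) \<Longrightarrow> deg ends (comp ends F v) u = deg ends F u"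
proof -
  assume u: "u \<in> verts ends (comp ends F v)"
  have r: "(adj ends F)\<^sup>*\<^sup>* v u" using comp_verts[OF u] .
  have key: "e \<in> comp ends F v \<longleftrightarrow> e \<in> F" if "u \<in> ends e" for e
  proof
    assume "e \<in> F" then show "e \<in> comp ends F v" using comp_edge[of e F u ends v] that r by blast
  qed (use comp_sub[of ends F v] in blast)
  have 1: "{e \<in> comp ends F v. u \<in> ends e} = {e \<in> F. u \<in> ends e}"
    using key by blast
  have 2: "{e \<in> comp ends F v. ends e = {u}} = {e \<in> F. ends e = {u}}"
    using key by blast
  show ?thesis unfolding deg_def 1 2 ..
qed

lemma reach_comp: "(adj ends F)\<^sup>*\<^sup>* v u \<Longrightarrow> (adj ends (comp ends F v))\<^sup>*\<^sup>* v u"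
proof (induction rule: rtranclp_induct)
  case base then show ?case by simp
next
  case (step y z)
  from step(2) obtain e where e: "e \<in> F" "y \<in> ends e" "z \<in> ends e" unfolding adj_def by auto
  have "e \<in> comp ends F v" using comp_edge[OF e(1) e(2) step(1)] .
  then have "adj ends (comp ends F v) y z" unfolding adj_def using e by auto
  with step(3) show ?case by (meson rtranclp.rtrancl_into_rtrancl)
qed

lemma comp_conn: "connected_graph ends (comp ends F v)"
  unfolding connected_graph_def
proof (intro ballI)
  fix u w assume u: "u \<in> verts ends (comp ends F v)" and w: "w \<in> verts ends (comp ends F v)"
  have "(adj ends (comp ends F v))\<^sup>*\<^sup>* v u" by (rule reach_comp[OF comp_verts[OF u]])
  then have 1: "(adj ends (comp ends F v))\<^sup>*\<^sup>* u v" by (rule reach_sym)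
  have 2: "(adj ends (comp ends F v))\<^sup>*\<^sup>* v w" by (rule reach_comp[OF comp_verts[OF w]])
  from 1 2 show "(adj ends (comp ends F v))\<^sup>*\<^sup>* u w" by (rule rtranclp_trans)
qed

lemma comp_mono: "A \<subseteq> F \<Longrightarrow> comp ends A v \<subseteq> comp ends F v"
proof
  fix e assume s: "A \<subseteq> F" and "e \<in> comp ends A v"
  then obtain u where u: "e \<in> A" "u \<in> ends e" "(adj ends A)\<^sup>*\<^sup>* v u" unfolding comp_def by blast
  have "(adj ends F)\<^sup>*\<^sup>* v u" by (rule reach_mono[OF u(3) s])
  then show "e \<in> comp ends F v" using comp_edge[of e F u ends v] u s by blast
qed

lemma comp_eq: "(adj ends F)\<^sup>*\<^sup>* v a \<Longrightarrow> comp ends F v = comp ends F a"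
proof -
  assume r: "(adj ends F)\<^sup>*\<^sup>* v a"
  have r': "(adj ends F)\<^sup>*\<^sup>* a v" using reach_sym[OF r] .
  show ?thesis unfolding comp_def
  proof (intro Collect_cong conj_cong refl iffI)
    fix e assume "\<exists>u\<in>ends e. (adj ends F)\<^sup>*\<^sup>* v u"
    then show "\<exists>u\<in>ends e. (adj ends F)\<^sup>*\<^sup>* a u" using r' by (meson rtranclp_trans)
  next
    fix e assume "\<exists>u\<in>ends e. (adj ends F)\<^sup>*\<^sup>* a u"
    then show "\<exists>u\<in>ends e. (adj ends F)\<^sup>*\<^sup>* v u" using r by (meson rtranclp_trans)
  qed
qed

lemma comp_self: "connected_graph ends A \<Longrightarrow> v \<in> verts ends A \<Longrightarrow> good ends A \<Longrightarrow> comp ends A v = A"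
proof
  assume c: "connected_graph ends A" and v: "v \<in> verts ends A" and g: "good ends A"
  show "comp ends A v \<subseteq> A" by (rule comp_sub)
  show "A \<subseteq> comp ends A v"
  proof
    fix e assume e: "e \<in> A"
    show "e \<in> comp ends A v"
    proof (cases "ends e = {}")
      case True
      then show ?thesis using good_ends[OF g e] by simp
    next
      case False
      then obtain u where u: "u \<in> ends e" by auto
      then have "u \<in> verts ends A" by (rule in_verts[OF e])
      then have "(adj ends A)\<^sup>*\<^sup>* v u" using c v unfolding connected_graph_def by blast
      then show ?thesis using comp_edge[where ends=ends, OF e u] by blast
    qed
  qed
qed


lemma comp_cycle_sub:
  assumes fF: "finite F" and cyc: "is_cycle ends (comp ends F v)" and AF: "A \<subseteq> F"
    and v: "v \<in> verts ends A" and nl: "\<forall>u\<in>verts ends A. \<not> is_leaf ends A u"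
  shows "is_cycle ends (comp ends A v)"
proof -
  let ?K = "comp ends A v"
  have fA: "finite A" using fF AF finite_subset by blast
  obtain e where e: "e \<in> A" "v \<in> ends e" using v by (auto elim: in_vertsE)
  have "e \<in> ?K" by (rule comp_edge[where ends=ends, OF e rtranclp.rtrancl_refl])
  then have ne: "?K \<noteq> {}" by blast
  have "deg ends ?K u = 2" if u: "u \<in> verts ends ?K" for u
  proof -
    have dK: "deg ends ?K u = deg ends A u" by (rule deg_comp[OF u])
    have uA: "u \<in> verts ends A" using verts_mono[OF comp_sub[of ends A v], of ends] u by blast
    have ge2: "deg ends A u \<ge> 2" using nonleaf_deg[OF fA uA] nl uA by blast
    have uF: "u \<in> verts ends (comp ends F v)" using verts_mono[OF comp_mono[OF AF, of ends v], of ends] u by blast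
    have d2: "deg ends (comp ends F v) u = 2" by (rule cycle_deg2[OF cyc uF])
    have dF: "deg ends (comp ends F v) u = deg ends F u" by (rule deg_comp[OF uF])
    have "deg ends A u \<le> deg ends F u" by (rule deg_mono[OF AF fF])
    then show ?thesis using dK ge2 d2 dF by simp
  qed
  then show ?thesis unfolding is_cycle_def using ne comp_conn[of ends A v] by blast
qed

lemma comp_closed:
  assumes CF: "C \<subseteq> F" and conn: "connected_graph ends C" and c: "c \<in> verts ends C"
    and cl: "\<forall>e\<in>F. ends e \<inter> verts ends C \<noteq> {} \<longrightarrow> e \<in> C" and g: "good ends C"
  shows "comp ends F c = C"
proof
  have stay: "u \<in> verts ends C" if r: "(adj ends F)\<^sup>*\<^sup>* c u" for u
    using r
  proof (induction rule: rtranclp_induct)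
    case base then show ?case by (rule c)
  next
    case (step y z)
    from step(2) obtain e where e: "e \<in> F" "y \<in> ends e" "z \<in> ends e" unfolding adj_def by auto
    have "ends e \<inter> verts ends C \<noteq> {}" using e step(3) by blast
    then have "e \<in> C" using cl e(1) by blast
    then show ?case using e(3) by (rule in_verts)
  qed
  show "comp ends F c \<subseteq> C"
  proof
    fix e assume "e \<in> comp ends F c"
    then obtain u where u: "e \<in> F" "u \<in> ends e" "(adj ends F)\<^sup>*\<^sup>* c u" unfolding comp_def by blast
    have "u \<in> verts ends C" by (rule stay[OF u(3)])
    then have "ends e \<inter> verts ends C \<noteq> {}" using u by blast
    then show "e \<in> C" using cl u(1) by blast
  qed
  have "comp ends C c = C" by (rule comp_self[OF conn c g])
  then show "C \<subseteq> comp ends F c" using comp_mono[OF CF, of ends c] by simp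
qed



definition ear :: "('e \<Rightarrow> 'v set) \<Rightarrow> 'v set \<Rightarrow> 'e set \<Rightarrow> bool" where
  "ear ends W Q \<longleftrightarrow> (\<exists>x y. pth ends Q x y \<and> verts ends Q \<inter> W = {x,y}) \<or>
     (is_cycle ends Q \<and> (\<exists>w. verts ends Q \<inter> W = {w})) \<or>
     (\<exists>x. lolli ends Q x \<and> verts ends Q \<inter> W = {x})"

lemma walk:
  assumes g: "good ends F" and nl: "\<forall>v\<in>verts ends F. \<not> is_leaf ends F v" and HF: "H \<subseteq> F"
    and out: "\<forall>e\<in>F. \<forall>v\<in>ends e. v \<notin> W \<longrightarrow> e \<in> H"
  shows "pth ends P v w \<Longrightarrow> P \<subseteq> H \<Longrightarrow> verts ends P \<inter> W = {w} \<Longrightarrow> \<exists>Q \<subseteq> H. Q \<noteq> {} \<and> ear ends W Q"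
proof (induction "card (verts ends F) - card (verts ends P)" arbitrary: P v rule: less_induct)
  case less
  note p = less.prems(1) and PH = less.prems(2) and PW = less.prems(3)
  have fF: "finite F" using g good_def by blast
  have b: "finite P" "v \<noteq> w" "v \<in> verts ends P" "w \<in> verts ends P" using pth_basic[OF p] by auto
  have PF: "P \<subseteq> F" using PH HF by blast
  have vW: "v \<notin> W" using PW b by blast
  have dP: "deg ends P v = 1" using pth_deg[OF p, of v] by simp
  have vF: "v \<in> verts ends F" using verts_mono[OF PF, of ends] b by blast
  have dF: "deg ends F v \<ge> 2" using nonleaf_deg[OF fF vF] nl vF by blast
  have "F = P \<union> (F - P)" using PF by blast
  then have "deg ends F v = deg ends P v + deg ends (F - P) v"
    using deg_Un[of P "F - P" ends v] b fF by (metis Diff_disjoint finite_Diff)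
  then have "deg ends (F - P) v \<noteq> 0" using dP dF by simp
  then have "v \<in> verts ends (F - P)" using deg_zero by metis
  then obtain e' where e': "e' \<in> F" "e' \<notin> P" "v \<in> ends e'" by (auto elim: in_vertsE)
  have e'H: "e' \<in> H" using out e' vW by blast
  have ins: "insert e' P \<subseteq> H" using e'H PH by blast
  show ?case
  proof (rule good_endsE[OF g e'(1) e'(3)])
    assume loop: "ends e' = {v}"
    have "lolli ends (insert e' P) w"
      unfolding lolli_def
    proof (intro exI conjI)
      show "is_cycle ends {e'}" by (rule cycle_loop[where ends=ends, OF loop])
      show "pth ends P w v" by (rule pth_rev[OF p])
      show "{e'} \<inter> P = {}" using e' by blast
      show "verts ends {e'} \<inter> verts ends P = {v}" using loop b by auto
      show "insert e' P = {e'} \<union> P" by simp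
    qed
    moreover have "verts ends (insert e' P) \<inter> W = {w}" using loop PW vW by auto
    ultimately have "ear ends W (insert e' P)" unfolding ear_def by blast
    then show ?thesis using ins by blast
  next
    fix u assume eu: "ends e' = {v,u}" "u \<noteq> v"
    show ?thesis
    proof (cases "u = w")
      case True
      have "is_cycle ends (insert e' P)" by (rule cycle_close[OF p e'(2)]) (use eu True in simp)
      moreover have "verts ends (insert e' P) \<inter> W = {w}" using eu True PW vW by auto
      ultimately have "ear ends W (insert e' P)" unfolding ear_def by blast
      then show ?thesis using ins by blast
    next
      case uw: False
      show ?thesis
      proof (cases "u \<in> W")
        case True
        have uP: "u \<notin> verts ends P" using PW True uw by blast
        have "pth ends (insert e' P) u w" by (rule pth.cons[OF p _ uP]) (use eu in auto)
        moreover have "verts ends (insert e' P) \<inter> W = {u,w}" using eu True PW vW by auto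
        ultimately have "ear ends W (insert e' P)" unfolding ear_def by blast
        then show ?thesis using ins by blast
      next
        case uW: False
        show ?thesis
        proof (cases "u \<in> verts ends P")
          case True
          obtain P1 P2 where s: "pth ends P1 v u" "pth ends P2 u w" "P1 \<inter> P2 = {}"
            "verts ends P1 \<inter> verts ends P2 = {u}" "P = P1 \<union> P2"
            using pth_split[OF p True eu(2) uw] by blast
          have b1: "v \<in> verts ends P1" "u \<in> verts ends P1" using pth_basic[OF s(1)] by auto
          have cyc: "is_cycle ends (insert e' P1)" by (rule cycle_close[OF s(1)]) (use e' s eu in auto)
          have "lolli ends (insert e' P) w"
            unfolding lolli_def
          proof (intro exI conjI)
            show "is_cycle ends (insert e' P1)" by (rule cyc)
            show "pth ends P2 w u" by (rule pth_rev[OF s(2)])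
            show "insert e' P1 \<inter> P2 = {}" using e' s by blast
            show "verts ends (insert e' P1) \<inter> verts ends P2 = {u}" using s(4) eu b1 by auto
            show "insert e' P = insert e' P1 \<union> P2" using s(5) by blast
          qed
          moreover have "verts ends (insert e' P) \<inter> W = {w}" using eu PW vW uW by auto
          ultimately have "ear ends W (insert e' P)" unfolding ear_def by blast
          then show ?thesis using ins by blast
        next
          case uP: False
          have p': "pth ends (insert e' P) u w" by (rule pth.cons[OF p _ uP]) (use eu in auto)
          have W': "verts ends (insert e' P) \<inter> W = {w}" using eu PW uW vW by auto
          have fV: "finite (verts ends F)" using finite_verts[OF g] .
          have sub: "verts ends (insert e' P) \<subseteq> verts ends F" using verts_mono[of "insert e' P" F ends] ins HF by blast
          have vi: "verts ends (insert e' P) = insert u (verts ends P)" using eu b by auto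
          have "card (verts ends (insert e' P)) = Suc (card (verts ends P))"
            unfolding vi using uP finite_verts[OF good_mono[OF g PF]] by simp
          moreover have "card (verts ends (insert e' P)) \<le> card (verts ends F)" using card_mono[OF fV sub] .
          ultimately have "card (verts ends F) - card (verts ends (insert e' P)) < card (verts ends F) - card (verts ends P)"
            by simp
          then show ?thesis using less.hyps p' ins W' by blast
        qed
      qed
    qed
  qed
qed


lemma walk_start:
  assumes g: "good ends F" and nl: "\<forall>v\<in>verts ends F. \<not> is_leaf ends F v" and HF: "H \<subseteq> F"
    and out: "\<forall>e\<in>F. \<forall>v\<in>ends e. v \<notin> W \<longrightarrow> e \<in> H"
    and e: "e \<in> H" "a \<in> ends e" "a \<in> W"
  shows "\<exists>Q \<subseteq> H. Q \<noteq> {} \<and> ear ends W Q"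
proof -
  have eF: "e \<in> F" using e HF by blast
  show ?thesis
  proof (rule good_endsE[OF g eF e(2)])
    assume loop: "ends e = {a}"
    have "is_cycle ends {e}" by (rule cycle_loop[where ends=ends, OF loop])
    moreover have "verts ends {e} \<inter> W = {a}" using loop e by auto
    ultimately have "ear ends W {e}" unfolding ear_def by blast
    then show ?thesis using e by blast
  next
    fix u assume eu: "ends e = {a,u}" "u \<noteq> a"
    show ?thesis
    proof (cases "u \<in> W")
      case True
      have "pth ends {e} a u" by (rule pth.one) (use eu in auto)
      moreover have "verts ends {e} \<inter> W = {a,u}" using eu e True by auto
      ultimately have "ear ends W {e}" unfolding ear_def by blast
      then show ?thesis using e by blast
    next
      case False
      have p: "pth ends {e} u a" by (rule pth.one) (use eu in auto)
      have "verts ends {e} \<inter> W = {a}" using eu e False by auto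
      then show ?thesis using walk[OF g nl HF out p] e by blast
    qed
  qed
qed

lemma ear_props:
  assumes g: "good ends Q" and ear: "ear ends W Q"
  shows "Q \<noteq> {} \<and> connected_graph ends Q \<and> verts ends Q \<inter> W \<noteq> {} \<and>
     (\<forall>v. deg ends Q v = 1 \<longrightarrow> v \<in> W) \<and> excess ends Q + int (card (verts ends Q \<inter> W)) = 1"
proof -
  have fQ: "finite Q" using g good_def by blast
  consider (p) x y where "pth ends Q x y" "verts ends Q \<inter> W = {x,y}"
    | (c) w where "is_cycle ends Q" "verts ends Q \<inter> W = {w}"
    | (l) x where "lolli ends Q x" "verts ends Q \<inter> W = {x}"
    using ear unfolding ear_def by blast
  then show ?thesis
  proof cases
    case p
    have b: "Q \<noteq> {}" "x \<noteq> y" using pth_basic[OF p(1)] by auto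
    have L: "{v. deg ends Q v = 1} = {x,y}" by (rule L_pth[OF p(1)])
    have "excess ends Q = -1" by (rule exc_pth[OF p(1)])
    then show ?thesis using b L p pth_conn[OF p(1)] by auto
  next
    case c
    have L: "{v. deg ends Q v = 1} = {}" by (rule L_cycle[OF c(1)])
    have "excess ends Q = 0" by (rule cycle_excess[OF g c(1)])
    moreover have "Q \<noteq> {}" using c(1) unfolding is_cycle_def by blast
    ultimately show ?thesis using L c cycle_conn[OF c(1)] by auto
  next
    case l
    have L: "{v. deg ends Q v = 1} = {x}" by (rule L_lolli[OF g l(1)])
    have "excess ends Q = 0 \<and> connected_graph ends Q \<and> Q \<noteq> {}" by (rule lolli_parts[OF l(1) g])
    then show ?thesis using L l by auto
  qed
qed



definition stepok :: "('e \<Rightarrow> 'v set) \<Rightarrow> 'e set \<Rightarrow> 'e set \<Rightarrow> 'e set \<Rightarrow> 'e set \<Rightarrow> bool" where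
  "stepok ends E G0 G1 P \<longleftrightarrow>
          P \<subseteq> E \<and> G1 = G0 \<union> P \<and> P \<inter> G0 = {} \<and>
          (is_any_path ends P \<or> is_cycle ends P \<or>
           is_any_lollipop ends P \<or> is_bicycle ends P) \<and>
          (\<forall>x y. is_path ends P x y \<longrightarrow>
             verts ends G0 \<inter> verts ends P = {x, y}) \<and>
          (\<forall>x. is_lollipop ends P x \<longrightarrow>
             verts ends G0 \<inter> verts ends P = {x}) \<and>
          (is_cycle ends P \<longrightarrow>
             card (verts ends G0 \<inter> verts ends P) = 1) \<and>
          (is_bicycle ends P \<longrightarrow>
             verts ends G0 \<inter> verts ends P = {}) \<and>
          G0 \<subset> G1 \<and>
          excess ends G1 - excess ends G0 = 1"

lemma cl_path: "is_path ends Q x y \<Longrightarrow> {v. deg ends Q v = 1} = {x,y} \<and> x \<noteq> y \<and> excess ends Q = -1"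
  unfolding pth_iff using L_pth exc_pth pth_basic by metis

lemma cl_lolli: "good ends Q \<Longrightarrow> is_lollipop ends Q x \<Longrightarrow> {v. deg ends Q v = 1} = {x} \<and> excess ends Q = 0"
  unfolding lolli_iff using L_lolli lolli_parts by metis

lemma cl_cycle: "good ends Q \<Longrightarrow> is_cycle ends Q \<Longrightarrow> {v. deg ends Q v = 1} = {} \<and> excess ends Q = 0"
  using L_cycle cycle_excess by metis

lemma cl_bicycle: "good ends Q \<Longrightarrow> is_bicycle ends Q \<Longrightarrow> {v. deg ends Q v = 1} = {} \<and> excess ends Q = 1"
proof -
  assume g: "good ends Q" and b: "is_bicycle ends Q"
  have "finite Q" using g good_def by blast
  then show ?thesis using L_bicycle[of Q ends] b unfolding is_bicycle_def by blast
qed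


lemma step_ear:
  assumes g: "good ends (E0 \<union> Q)" and QE: "Q \<subseteq> E" and dj: "Q \<inter> E0 = {}"
    and ear: "ear ends (verts ends E0) Q"
  shows "stepok ends E E0 (E0 \<union> Q) Q"
proof -
  have gQ: "good ends Q" by (rule good_mono[OF g]) blast
  have pr: "Q \<noteq> {} \<and> connected_graph ends Q \<and> verts ends Q \<inter> verts ends E0 \<noteq> {} \<and>
     (\<forall>v. deg ends Q v = 1 \<longrightarrow> v \<in> verts ends E0) \<and>
     excess ends Q + int (card (verts ends Q \<inter> verts ends E0)) = 1"
    by (rule ear_props[OF gQ ear])
  have dj': "E0 \<inter> Q = {}" using dj by blast
  have exc: "excess ends (E0 \<union> Q) = excess ends E0 + excess ends Q + int (card (verts ends E0 \<inter> verts ends Q))"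
    by (rule exc_union[OF g dj'])
  have ic: "verts ends E0 \<inter> verts ends Q = verts ends Q \<inter> verts ends E0" by blast
  have common: "E0 \<subset> E0 \<union> Q \<and> excess ends (E0 \<union> Q) - excess ends E0 = 1"
    using pr dj exc ic by auto
  let ?L = "{v. deg ends Q v = 1}"
  consider (p) x y where "pth ends Q x y" "verts ends Q \<inter> verts ends E0 = {x,y}"
    | (c) w where "is_cycle ends Q" "verts ends Q \<inter> verts ends E0 = {w}"
    | (l) x where "lolli ends Q x" "verts ends Q \<inter> verts ends E0 = {x}"
    using ear unfolding ear_def by blast
  then show ?thesis
  proof cases
    case p
    have ip: "is_path ends Q x y" using p(1) pth_iff by metis
    have Lp: "?L = {x,y}" "x \<noteq> y" using cl_path[OF ip] by auto
    have t: "is_any_path ends Q" using ip unfolding is_any_path_def by blast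
    have a1: "\<forall>x' y'. is_path ends Q x' y' \<longrightarrow> verts ends E0 \<inter> verts ends Q = {x', y'}"
      using cl_path[of ends Q] Lp p(2) ic by auto
    have a2: "\<forall>x'. \<not> is_lollipop ends Q x'"
    proof (intro allI notI)
      fix x' assume "is_lollipop ends Q x'"
      then have "?L = {x'}" using cl_lolli[OF gQ] by blast
      then have "x \<in> {x'}" "y \<in> {x'}" using Lp(1) by blast+
      then show False using Lp(2) by simp
    qed
    have a3: "\<not> is_cycle ends Q" using cl_cycle[OF gQ] Lp by auto
    have a4: "\<not> is_bicycle ends Q" using cl_bicycle[OF gQ] Lp by auto
    show ?thesis unfolding stepok_def using QE dj t a1 a2 a3 a4 common by blast
  next
    case c
    have Lc: "?L = {}" "excess ends Q = 0" using cl_cycle[OF gQ c(1)] by auto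
    have a1: "\<forall>x' y'. \<not> is_path ends Q x' y'" using cl_path[of ends Q] Lc by auto
    have a2: "\<forall>x'. \<not> is_lollipop ends Q x'" using cl_lolli[OF gQ] Lc by auto
    have a3: "card (verts ends E0 \<inter> verts ends Q) = 1" using c(2) ic by simp
    have a4: "\<not> is_bicycle ends Q" using cl_bicycle[OF gQ] Lc by auto
    show ?thesis unfolding stepok_def using QE dj c(1) a1 a2 a3 a4 common by blast
  next
    case l
    have il: "is_lollipop ends Q x" using l(1) lolli_iff by metis
    have Ll: "?L = {x}" "excess ends Q = 0" using cl_lolli[OF gQ il] by auto
    have t: "is_any_lollipop ends Q" using il unfolding is_any_lollipop_def by blast
    have a1: "\<forall>x' y'. \<not> is_path ends Q x' y'" using cl_path[of ends Q] Ll by auto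
    have a2: "\<forall>x'. is_lollipop ends Q x' \<longrightarrow> verts ends E0 \<inter> verts ends Q = {x'}"
      using cl_lolli[OF gQ] Ll l(2) ic by auto
    have a3: "\<not> is_cycle ends Q" using cl_cycle[OF gQ] Ll by auto
    have a4: "\<not> is_bicycle ends Q" using cl_bicycle[OF gQ] Ll by auto
    show ?thesis unfolding stepok_def using QE dj t a1 a2 a3 a4 common by blast
  qed
qed

lemma step_bic:
  assumes g: "good ends (E0 \<union> Q)" and QE: "Q \<subseteq> E" and dj: "Q \<inter> E0 = {}"
    and b: "is_bicycle ends Q" and iv: "verts ends E0 \<inter> verts ends Q = {}" and ne: "Q \<noteq> {}"
  shows "stepok ends E E0 (E0 \<union> Q) Q"
proof -
  have gQ: "good ends Q" by (rule good_mono[OF g]) blast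
  have dj': "E0 \<inter> Q = {}" using dj by blast
  have exc: "excess ends (E0 \<union> Q) = excess ends E0 + excess ends Q + int (card (verts ends E0 \<inter> verts ends Q))"
    by (rule exc_union[OF g dj'])
  have Lb: "{v. deg ends Q v = 1} = {}" "excess ends Q = 1" using cl_bicycle[OF gQ b] by auto
  have common: "E0 \<subset> E0 \<union> Q \<and> excess ends (E0 \<union> Q) - excess ends E0 = 1"
    using ne dj exc iv Lb by auto
  have a1: "\<forall>x' y'. \<not> is_path ends Q x' y'" using cl_path[of ends Q] Lb by auto
  have a2: "\<forall>x'. \<not> is_lollipop ends Q x'" using cl_lolli[OF gQ] Lb by auto
  have a3: "\<not> is_cycle ends Q" using cl_cycle[OF gQ] Lb by auto
  show ?thesis unfolding stepok_def using QE dj b a1 a2 a3 iv common by blast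
qed


lemma cacti_ear:
  assumes g: "good ends (E0 \<union> Q)" and dj: "Q \<inter> E0 = {}" and ear: "ear ends (verts ends E0) Q"
    and c0: "is_cacti ends E0"
  shows "is_cacti ends (E0 \<union> Q)"
proof -
  let ?G = "E0 \<union> Q"
  have gQ: "good ends Q" by (rule good_mono[OF g]) blast
  have fG: "finite ?G" using g good_def by blast
  have fE0: "finite E0" and fQ: "finite Q" using fG by auto
  have pr: "Q \<noteq> {} \<and> connected_graph ends Q \<and> verts ends Q \<inter> verts ends E0 \<noteq> {} \<and>
     (\<forall>v. deg ends Q v = 1 \<longrightarrow> v \<in> verts ends E0) \<and>
     excess ends Q + int (card (verts ends Q \<inter> verts ends E0)) = 1"
    by (rule ear_props[OF gQ ear])
  have nl0: "\<forall>v\<in>verts ends E0. \<not> is_leaf ends E0 v" and cy0: "\<forall>v\<in>verts ends E0. \<not> is_cycle ends (comp ends E0 v)"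
    using c0 unfolding is_cacti_def by auto
  have dj': "E0 \<inter> Q = {}" using dj by blast
  have dsplit: "deg ends ?G v = deg ends E0 v + deg ends Q v" for v by (rule deg_Un[OF dj' fE0 fQ])
  have nlG: "\<not> is_leaf ends ?G v" if v: "v \<in> verts ends ?G" for v
  proof -
    have "deg ends ?G v \<noteq> 1"
    proof (cases "v \<in> verts ends E0")
      case True
      then have "deg ends E0 v \<ge> 2" using nonleaf_deg[OF fE0 True] nl0 by blast
      then show ?thesis using dsplit[of v] by simp
    next
      case False
      then have vQ: "v \<in> verts ends Q" using v by simp
      have "deg ends E0 v = 0" by (rule deg_zero[OF False])
      moreover have "deg ends Q v \<noteq> 1" using pr False by blast
      ultimately show ?thesis using dsplit[of v] by simp
    qed
    then show ?thesis using leaf_iff[OF fG, of ends v] by simp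
  qed
  have cyG: "\<not> is_cycle ends (comp ends ?G v)" if v: "v \<in> verts ends ?G" for v
  proof
    assume cyc: "is_cycle ends (comp ends ?G v)"
    obtain a where a: "a \<in> verts ends E0" "(adj ends ?G)\<^sup>*\<^sup>* v a"
    proof (cases "v \<in> verts ends E0")
      case True then show ?thesis using that[of v] by simp
    next
      case False
      then have vQ: "v \<in> verts ends Q" using v by simp
      obtain a where a: "a \<in> verts ends Q" "a \<in> verts ends E0" using pr by blast
      have "(adj ends Q)\<^sup>*\<^sup>* v a" using pr vQ a(1) unfolding connected_graph_def by blast
      then have "(adj ends ?G)\<^sup>*\<^sup>* v a" by (rule reach_mono) blast
      then show ?thesis using that a by blast
    qed
    have "comp ends ?G v = comp ends ?G a" by (rule comp_eq[OF a(2)])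
    then have "is_cycle ends (comp ends ?G a)" using cyc by simp
    then have "is_cycle ends (comp ends E0 a)" by (rule comp_cycle_sub[OF fG _ _ a(1) nl0]) blast
    then show False using cy0 a(1) by blast
  qed
  show ?thesis unfolding is_cacti_def using nlG cyG by blast
qed

lemma cacti_bic:
  assumes g: "good ends (E0 \<union> B)" and dj: "B \<inter> E0 = {}" and b: "is_bicycle ends B"
    and iv: "verts ends E0 \<inter> verts ends B = {}" and c0: "is_cacti ends E0"
  shows "is_cacti ends (E0 \<union> B)"
proof -
  let ?G = "E0 \<union> B"
  have gB: "good ends B" by (rule good_mono[OF g]) blast
  have fG: "finite ?G" using g good_def by blast
  have fE0: "finite E0" and fB: "finite B" using fG by auto
  have nl0: "\<forall>v\<in>verts ends E0. \<not> is_leaf ends E0 v" and cy0: "\<forall>v\<in>verts ends E0. \<not> is_cycle ends (comp ends E0 v)"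
    using c0 unfolding is_cacti_def by auto
  have nlB: "\<forall>v\<in>verts ends B. \<not> is_leaf ends B v" and cB: "connected_graph ends B"
    and eB: "excess ends B = 1"
    using b unfolding is_bicycle_def by auto
  have dj': "E0 \<inter> B = {}" using dj by blast
  have dsplit: "deg ends ?G v = deg ends E0 v + deg ends B v" for v by (rule deg_Un[OF dj' fE0 fB])
  have nlG: "\<not> is_leaf ends ?G v" if v: "v \<in> verts ends ?G" for v
  proof -
    have "deg ends ?G v \<noteq> 1"
    proof (cases "v \<in> verts ends E0")
      case True
      then have "deg ends E0 v \<ge> 2" using nonleaf_deg[OF fE0 True] nl0 by blast
      then show ?thesis using dsplit[of v] by simp
    next
      case False
      then have vB: "v \<in> verts ends B" using v by simp
      have "deg ends E0 v = 0" by (rule deg_zero[OF False])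
      moreover have "deg ends B v \<ge> 2" using nonleaf_deg[OF fB vB] nlB vB by blast
      ultimately show ?thesis using dsplit[of v] by simp
    qed
    then show ?thesis using leaf_iff[OF fG, of ends v] by simp
  qed
  have cyG: "\<not> is_cycle ends (comp ends ?G v)" if v: "v \<in> verts ends ?G" for v
  proof
    assume cyc: "is_cycle ends (comp ends ?G v)"
    show False
    proof (cases "v \<in> verts ends E0")
      case True
      have "is_cycle ends (comp ends E0 v)" by (rule comp_cycle_sub[OF fG cyc _ True nl0]) blast
      then show False using cy0 True by blast
    next
      case False
      then have vB: "v \<in> verts ends B" using v by simp
      have "is_cycle ends (comp ends B v)" by (rule comp_cycle_sub[OF fG cyc _ vB nlB]) blast
      moreover have "comp ends B v = B" by (rule comp_self[OF cB vB gB])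
      ultimately have "is_cycle ends B" by simp
      then have "excess ends B = 0" by (rule cycle_excess[OF gB])
      then show False using eB by simp
    qed
  qed
  show ?thesis unfolding is_cacti_def using nlG cyG by blast
qed



lemma other_edge:
  assumes g: "good ends E" and nl: "\<forall>v\<in>verts ends E. \<not> is_leaf ends E v"
    and e0: "e0 \<in> E" "ends e0 = {a,b}" "a \<noteq> b"
  shows "\<exists>e\<in>E. e \<noteq> e0 \<and> a \<in> ends e"
proof -
  have fE: "finite E" using g good_def by blast
  have aE: "a \<in> verts ends E" using e0 by (auto intro: in_verts)
  have "deg ends E a \<ge> 2" using nonleaf_deg[OF fE aE] nl aE by blast
  moreover have "E = insert e0 (E - {e0})" using e0 by blast
  then have "deg ends E a = deg ends {e0} a + deg ends (E - {e0}) a"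
    using deg_insert[of e0 "E - {e0}" ends a] fE by simp
  moreover have "deg ends {e0} a = 1" using deg_edge[where ends=ends, OF e0(2,3), of a] by simp
  ultimately have "deg ends (E - {e0}) a \<noteq> 0" by simp
  then have "a \<in> verts ends (E - {e0})" using deg_zero by metis
  then show ?thesis by (auto elim: in_vertsE)
qed

lemma find_cycle:
  assumes g: "good ends E" and nlE: "\<forall>v\<in>verts ends E. \<not> is_leaf ends E v"
    and out: "\<forall>e\<in>E. \<forall>v\<in>ends e. v \<notin> W \<longrightarrow> e \<in> H" and HF: "H \<subseteq> E"
    and e0: "e0 \<in> H" and nt: "\<forall>e\<in>H. ends e \<inter> W = {}"
  shows "\<exists>C \<subseteq> H. is_cycle ends C"
proof -
  have e0E: "e0 \<in> E" using e0 HF by blast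
  obtain a where a: "a \<in> ends e0" using good_ends[OF g e0E] by blast
  show ?thesis
  proof (rule good_endsE[OF g e0E a])
    assume "ends e0 = {a}"
    then have "is_cycle ends {e0}" by (rule cycle_loop)
    then show ?thesis using e0 by blast
  next
    fix b assume ab: "ends e0 = {a,b}" "b \<noteq> a"
    let ?W = "W \<union> {a,b}" and ?H = "H - {e0}"
    have out': "\<forall>e\<in>E. \<forall>v\<in>ends e. v \<notin> ?W \<longrightarrow> e \<in> ?H" using out ab by auto
    have H'E: "?H \<subseteq> E" using HF by blast
    obtain e where e: "e \<in> E" "e \<noteq> e0" "a \<in> ends e" using other_edge[OF g nlE e0E ab(1)] ab(2) by blast
    have aW: "a \<notin> W" using nt e0 a by blast
    have eH: "e \<in> ?H" using out e aW by blast
    obtain Q where Q: "Q \<subseteq> ?H" "Q \<noteq> {}" "ear ends ?W Q"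
      using walk_start[OF g nlE H'E out' eH e(3)] by blast
    have QW: "verts ends Q \<inter> W = {}"
    proof -
      have "\<forall>e\<in>Q. ends e \<inter> W = {}" using nt Q(1) by blast
      then show ?thesis unfolding verts_def by blast
    qed
    have QW': "verts ends Q \<inter> ?W = verts ends Q \<inter> {a,b}" using QW by blast
    consider (p) x y where "pth ends Q x y" "verts ends Q \<inter> ?W = {x,y}"
      | (c) w where "is_cycle ends Q" "verts ends Q \<inter> ?W = {w}"
      | (l) x where "lolli ends Q x" "verts ends Q \<inter> ?W = {x}"
      using Q(3) unfolding ear_def by blast
    then show ?thesis
    proof cases
      case p
      have xy: "x \<noteq> y" using pth_basic[OF p(1)] by simp
      have "{x,y} \<subseteq> {a,b}" using p(2) QW' by blast
      then have "{x,y} = {a,b}" using xy ab(2) by auto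
      then have ee: "ends e0 = {x,y}" using ab by simp
      have "e0 \<notin> Q" using Q(1) by blast
      then have "is_cycle ends (insert e0 Q)" using cycle_close[OF p(1) _ ee] by blast
      moreover have "insert e0 Q \<subseteq> H" using Q(1) e0 by blast
      ultimately show ?thesis by blast
    next
      case c then show ?thesis using Q(1) by blast
    next
      case l
      then obtain C P y where "is_cycle ends C" "Q = C \<union> P" unfolding lolli_def by blast
      then show ?thesis using Q(1) by blast
    qed
  qed
qed


lemma one_step:
  assumes g: "good ends E" and cE: "is_cacti ends E" and c0: "is_cacti ends E0"
    and sub: "E0 \<subseteq> E" and ne: "E0 \<noteq> E"
  shows "\<exists>P. P \<noteq> {} \<and> stepok ends E E0 (E0 \<union> P) P \<and> is_cacti ends (E0 \<union> P) \<and> E0 \<union> P \<subseteq> E"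
proof -
  have nlE: "\<forall>v\<in>verts ends E. \<not> is_leaf ends E v" and cyE: "\<forall>v\<in>verts ends E. \<not> is_cycle ends (comp ends E v)"
    using cE unfolding is_cacti_def by auto
  have fE: "finite E" using g good_def by blast
  let ?H = "E - E0" and ?W = "verts ends E0"
  have HF: "?H \<subseteq> E" by blast
  have out: "\<forall>e\<in>E. \<forall>v\<in>ends e. v \<notin> ?W \<longrightarrow> e \<in> ?H" by (auto intro: in_verts)
  show ?thesis
  proof (cases "\<exists>e\<in>?H. \<exists>a\<in>ends e. a \<in> ?W")
    case True
    then obtain e a where ea: "e \<in> ?H" "a \<in> ends e" "a \<in> ?W" by blast
    obtain Q where Q: "Q \<subseteq> ?H" "Q \<noteq> {}" "ear ends ?W Q"
      using walk_start[OF g nlE HF out ea] by blast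
    have gU: "good ends (E0 \<union> Q)" by (rule good_mono[OF g]) (use Q sub in blast)
    have dj: "Q \<inter> E0 = {}" using Q by blast
    have QE: "Q \<subseteq> E" using Q by blast
    have "stepok ends E E0 (E0 \<union> Q) Q" by (rule step_ear[OF gU QE dj Q(3)])
    moreover have "is_cacti ends (E0 \<union> Q)" by (rule cacti_ear[OF gU dj Q(3) c0])
    ultimately show ?thesis using Q sub by blast
  next
    case False
    then have nt: "\<forall>e\<in>?H. ends e \<inter> ?W = {}" by blast
    have avoid: "verts ends Q \<inter> ?W = {}" if "Q \<subseteq> ?H" for Q
    proof -
      have "\<forall>e\<in>Q. ends e \<inter> ?W = {}" using nt that by blast
      then show ?thesis unfolding verts_def by blast
    qed
    obtain e0 where e0: "e0 \<in> ?H" using sub ne by blast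
    obtain C where C: "C \<subseteq> ?H" "is_cycle ends C" using find_cycle[OF g nlE out HF e0 nt] by blast
    have gC: "good ends C" by (rule good_mono[OF g]) (use C in blast)
    obtain c where c: "c \<in> verts ends C"
    proof -
      obtain e where "e \<in> C" using C(2) unfolding is_cycle_def by blast
      moreover then obtain u where "u \<in> ends e" using good_ends[OF gC] by blast
      ultimately show ?thesis using that in_verts by metis
    qed
    have CW: "verts ends C \<inter> ?W = {}" by (rule avoid[OF C(1)])
    have "\<exists>e\<in>E. e \<notin> C \<and> ends e \<inter> verts ends C \<noteq> {}"
    proof (rule ccontr)
      assume "\<not> ?thesis"
      then have cl: "\<forall>e\<in>E. ends e \<inter> verts ends C \<noteq> {} \<longrightarrow> e \<in> C" by blast
      have "comp ends E c = C" by (rule comp_closed[OF _ cycle_conn[OF C(2)] c cl gC]) (use C in blast)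
      moreover have "c \<in> verts ends E" using verts_mono[of C E ends] C c by blast
      ultimately show False using cyE C(2) by metis
    qed
    then obtain e c0 where e: "e \<in> E" "e \<notin> C" "c0 \<in> ends e" "c0 \<in> verts ends C" by blast
    have eE0: "e \<notin> E0" using e CW in_verts[of e E0 c0 ends] by blast
    let ?W2 = "?W \<union> verts ends C" and ?H2 = "?H - C"
    have out2: "\<forall>e\<in>E. \<forall>v\<in>ends e. v \<notin> ?W2 \<longrightarrow> e \<in> ?H2"
      using out by (auto intro: in_verts)
    have H2F: "?H2 \<subseteq> E" by blast
    have eH2: "e \<in> ?H2" using e eE0 by blast
    obtain Q where Q: "Q \<subseteq> ?H2" "Q \<noteq> {}" "ear ends ?W2 Q"
      using walk_start[OF g nlE H2F out2 eH2 e(3)] e(4) by blast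
    have QW: "verts ends Q \<inter> ?W = {}" by (rule avoid) (use Q in blast)
    have QW2: "verts ends Q \<inter> ?W2 = verts ends Q \<inter> verts ends C" using QW by blast
    let ?B = "C \<union> Q"
    have gB: "good ends ?B" by (rule good_mono[OF g]) (use C Q in blast)
    have gQ: "good ends Q" by (rule good_mono[OF gB]) blast
    have fC: "finite C" and fQ: "finite Q" using gB good_def by auto
    have pr: "Q \<noteq> {} \<and> connected_graph ends Q \<and> verts ends Q \<inter> ?W2 \<noteq> {} \<and>
       (\<forall>v. deg ends Q v = 1 \<longrightarrow> v \<in> ?W2) \<and>
       excess ends Q + int (card (verts ends Q \<inter> ?W2)) = 1"
      by (rule ear_props[OF gQ Q(3)])
    have djCQ: "C \<inter> Q = {}" using Q by blast
    have conn: "connected_graph ends ?B"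
      by (rule connected_Un[OF cycle_conn[OF C(2)]]) (use pr QW2 in auto)
    have dsplit: "deg ends ?B v = deg ends C v + deg ends Q v" for v by (rule deg_Un[OF djCQ fC fQ])
    have fB: "finite ?B" using fC fQ by simp
    have nlB: "\<forall>v\<in>verts ends ?B. \<not> is_leaf ends ?B v"
    proof
      fix v assume v: "v \<in> verts ends ?B"
      have "deg ends ?B v \<noteq> 1"
      proof (cases "v \<in> verts ends C")
        case True
        then have "deg ends C v = 2" by (rule cycle_deg2[OF C(2)])
        then show ?thesis using dsplit[of v] by simp
      next
        case False
        then have vQ: "v \<in> verts ends Q" using v by simp
        have "deg ends C v = 0" by (rule deg_zero[OF False])
        moreover have "v \<notin> ?W" using QW vQ by blast
        then have "deg ends Q v \<noteq> 1" using pr False by blast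
        ultimately show ?thesis using dsplit[of v] by simp
      qed
      then show "\<not> is_leaf ends ?B v" using leaf_iff[OF fB, of ends v] by simp
    qed
    have "excess ends ?B = excess ends C + excess ends Q + int (card (verts ends C \<inter> verts ends Q))"
      by (rule exc_union[OF gB djCQ])
    moreover have "excess ends C = 0" by (rule cycle_excess[OF gC C(2)])
    moreover have "verts ends C \<inter> verts ends Q = verts ends Q \<inter> ?W2" using QW2 by blast
    ultimately have exB: "excess ends ?B = 1" using pr by simp
    have bic: "is_bicycle ends ?B" unfolding is_bicycle_def using conn nlB exB by blast
    have BH: "?B \<subseteq> ?H" using C Q by blast
    have iv: "verts ends E0 \<inter> verts ends ?B = {}" using avoid[OF BH] by blast
    have dj: "?B \<inter> E0 = {}" using BH by blast
    have gU: "good ends (E0 \<union> ?B)" by (rule good_mono[OF g]) (use BH sub in blast)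
    have BE: "?B \<subseteq> E" using BH by blast
    have Bne: "?B \<noteq> {}" using Q by blast
    have "stepok ends E E0 (E0 \<union> ?B) ?B" by (rule step_bic[OF gU BE dj bic iv Bne])
    moreover have "is_cacti ends (E0 \<union> ?B)" by (rule cacti_bic[OF gU dj bic iv c0])
    ultimately show ?thesis using Bne BE sub by blast
  qed
qed




lemma chain:
  assumes g: "good ends E" and cE: "is_cacti ends E"
  shows "\<forall>E0. is_cacti ends E0 \<longrightarrow> E0 \<subseteq> E \<longrightarrow> E0 \<noteq> E \<longrightarrow> card (E - E0) = n \<longrightarrow>
    (\<exists>(r::nat) (P::nat \<Rightarrow> 'e set) Gs. Gs 0 = E0 \<and> Gs r = E \<and>
       (\<forall>i \<le> r. Gs i \<subseteq> E \<and> is_cacti ends (Gs i)) \<and>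
       (\<forall>i \<in> {1..r}. stepok ends E (Gs (i - 1)) (Gs i) (P i)))"
proof (induction n rule: less_induct)
  case (less n)
  show ?case
  proof (intro allI impI)
    fix E0 assume c0: "is_cacti ends E0" and sub: "E0 \<subseteq> E" and ne: "E0 \<noteq> E" and cn: "card (E - E0) = n"
    obtain P1 where P1: "P1 \<noteq> {}" "stepok ends E E0 (E0 \<union> P1) P1" "is_cacti ends (E0 \<union> P1)" "E0 \<union> P1 \<subseteq> E"
      using one_step[OF g cE c0 sub ne] by blast
    let ?G1 = "E0 \<union> P1"
    show "\<exists>(r::nat) (P::nat \<Rightarrow> 'e set) Gs. Gs 0 = E0 \<and> Gs r = E \<and>
       (\<forall>i \<le> r. Gs i \<subseteq> E \<and> is_cacti ends (Gs i)) \<and>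
       (\<forall>i \<in> {1..r}. stepok ends E (Gs (i - 1)) (Gs i) (P i))"
    proof (cases "?G1 = E")
      case True
      let ?Gs = "\<lambda>i::nat. if i = 0 then E0 else E"
      have st: "stepok ends E E0 E P1" using P1(2) True by simp
      have b1: "\<forall>i \<le> 1. ?Gs i \<subseteq> E \<and> is_cacti ends (?Gs i)"
      proof (intro allI impI)
        fix i :: nat assume "i \<le> 1"
        show "?Gs i \<subseteq> E \<and> is_cacti ends (?Gs i)" using sub c0 cE by simp
      qed
      have b2: "\<forall>i \<in> {1..1}. stepok ends E (?Gs (i - 1)) (?Gs i) ((\<lambda>_. P1) i)"
      proof
        fix i :: nat assume "i \<in> {1..1}"
        then have "i = 1" by simp
        then show "stepok ends E (?Gs (i - 1)) (?Gs i) ((\<lambda>_. P1) i)" using st by simp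
      qed
      have b0: "?Gs 0 = E0" "?Gs 1 = E" by simp_all
      show ?thesis by (rule exI[of _ 1], rule exI[of _ "\<lambda>_. P1"], rule exI[of _ ?Gs]) (use b0 b1 b2 in blast)
    next
      case False
      have dj: "P1 \<inter> E0 = {}" and P1E: "P1 \<subseteq> E" using P1(2) unfolding stepok_def by auto
      have fE: "finite E" using g good_def by blast
      have "E - ?G1 \<subset> E - E0" using P1(1) dj P1E by blast
      then have "card (E - ?G1) < card (E - E0)" by (rule psubset_card_mono[rotated]) (use fE in simp)
      then have "card (E - ?G1) < n" using cn by simp
      note ex = less.IH[rule_format, OF this P1(3) P1(4) False refl]
      then obtain r :: nat and Ps :: "nat \<Rightarrow> 'e set" and Gs :: "nat \<Rightarrow> 'e set" where IH: "Gs 0 = ?G1" "Gs r = E"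
          "\<forall>i \<le> r. Gs i \<subseteq> E \<and> is_cacti ends (Gs i)"
          "\<forall>i \<in> {1..r}. stepok ends E (Gs (i - 1)) (Gs i) (Ps i)"
        by blast
      define Gs' where "Gs' = (\<lambda>i::nat. if i = 0 then E0 else Gs (i - 1))"
      define Ps' where "Ps' = (\<lambda>i::nat. if i = 1 then P1 else Ps (i - 1))"
      have a1: "Gs' 0 = E0" "Gs' (Suc r) = E" unfolding Gs'_def using IH by auto
      have a2: "\<forall>i \<le> Suc r. Gs' i \<subseteq> E \<and> is_cacti ends (Gs' i)"
      proof (intro allI impI)
        fix i assume "i \<le> Suc r"
        then show "Gs' i \<subseteq> E \<and> is_cacti ends (Gs' i)"
          unfolding Gs'_def using IH(3) sub c0 by (cases i) auto
      qed
      have a3: "\<forall>i \<in> {1..Suc r}. stepok ends E (Gs' (i - 1)) (Gs' i) (Ps' i)"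
      proof
        fix i assume i: "i \<in> {1..Suc r}"
        show "stepok ends E (Gs' (i - 1)) (Gs' i) (Ps' i)"
        proof (cases "i = 1")
          case True
          then show ?thesis unfolding Gs'_def Ps'_def using IH(1) P1(2) by simp
        next
          case False
          then have i1: "i - 1 \<in> {1..r}" using i by auto
          have "Gs' (i - 1) = Gs (i - 1 - 1)" "Gs' i = Gs (i - 1)" "Ps' i = Ps (i - 1)"
            unfolding Gs'_def Ps'_def using i False by auto
          moreover have "stepok ends E (Gs (i - 1 - 1)) (Gs (i - 1)) (Ps (i - 1))" using bspec[OF IH(4) i1] .
          ultimately show ?thesis by simp
        qed
      qed
      show ?thesis by (rule exI[of _ "Suc r"], rule exI[of _ Ps'], rule exI[of _ Gs']) (use a1 a2 a3 in blast)
    qed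
  qed
qed


theorem mainTheorem4:
  fixes ends :: "'e \<Rightarrow> 'v set" and E E0 :: "'e set"
  assumes "finite E"
    and "\<forall>e \<in> E. card (ends e) = 1 \<or> card (ends e) = 2"
    and "is_cacti ends E" and "is_cacti ends E0" and "E0 \<subseteq> E"
  shows "E = E0 \<or>
    (\<exists>(r::nat) (P::nat \<Rightarrow> 'e set) (Gs::nat \<Rightarrow> 'e set).
       Gs 0 = E0 \<and> Gs r = E \<and>
       (\<forall>i \<le> r. Gs i \<subseteq> E \<and> is_cacti ends (Gs i)) \<and>
       (\<forall>i \<in> {1..r}.
          P i \<subseteq> E \<and> Gs i = Gs (i - 1) \<union> P i \<and> P i \<inter> Gs (i - 1) = {} \<and>
          (is_any_path ends (P i) \<or> is_cycle ends (P i) \<or>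
           is_any_lollipop ends (P i) \<or> is_bicycle ends (P i)) \<and>
          (\<forall>x y. is_path ends (P i) x y \<longrightarrow>
             verts ends (Gs (i - 1)) \<inter> verts ends (P i) = {x, y}) \<and>
          (\<forall>x. is_lollipop ends (P i) x \<longrightarrow>
             verts ends (Gs (i - 1)) \<inter> verts ends (P i) = {x}) \<and>
          (is_cycle ends (P i) \<longrightarrow>
             card (verts ends (Gs (i - 1)) \<inter> verts ends (P i)) = 1) \<and>
          (is_bicycle ends (P i) \<longrightarrow>
             verts ends (Gs (i - 1)) \<inter> verts ends (P i) = {}) \<and>
          Gs (i - 1) \<subset> Gs i \<and>
          excess ends (Gs i) - excess ends (Gs (i - 1)) = 1))"
proof -
  have g: "good ends E" using assms(1,2) unfolding good_def by blast
  show ?thesis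
  proof (cases "E = E0")
    case True then show ?thesis by blast
  next
    case False
    have ne: "E0 \<noteq> E" using False by blast
    obtain r :: nat and P :: "nat \<Rightarrow> 'e set" and Gs :: "nat \<Rightarrow> 'e set" where
      c: "Gs 0 = E0" "Gs r = E" "\<forall>i \<le> r. Gs i \<subseteq> E \<and> is_cacti ends (Gs i)"
         "\<forall>i \<in> {1..r}. stepok ends E (Gs (i - 1)) (Gs i) (P i)"
      using chain[OF g assms(3), rule_format, OF assms(4) assms(5) ne refl] by blast
    show ?thesis
      apply (rule disjI2)
      apply (rule exI[of _ r], rule exI[of _ P], rule exI[of _ Gs])
      unfolding stepok_def[symmetric]
      using c by blast
  qed
qed


end
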